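(* Let $n\ge1$; for $i\in[n]$ let $d_i\ge1$, $p_{i0}<\cdots<p_{id_i}$ reals, $f_i:\{p_{i0},\dots,p_{id_i}\}\to[L_i,U_i]$, and let $\phi:\prod_i[L_i,U_i]\to\mathbb{R}$ be supermodular. Let $\sigma=(\sigma_1,\dots,\sigma_n)$, each $\sigma_i$ a permutation of $\{0,\dots,d_i\}$ with $f_i(p_{i,\sigma_i(0)})\le\cdots\le f_i(p_{i,\sigma_i(d_i)})$. Define $h:\operatorname{vert}(\Delta)\to\mathbb{R}$ by $h(\boldsymbol{v}_{1j_1},\dots,\boldsymbol{v}_{nj_n})=\phi(f_1(p_{1,\sigma_1(j_1)}),\dots,f_n(p_{n,\sigma_n(j_n)}))$. Then $h$ is supermodular on $\operatorname{vert}(\Delta)$ with respect to the componentwise order.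
   Context: $\Delta^d=\{\boldsymbol{z}\in\mathbb{R}^d:1\ge z_1\ge\cdots\ge z_d\ge0\}$, $\Delta=\Delta^{d_1}\times\cdots\times\Delta^{d_n}$; the vertices of $\Delta^{d_i}$ are $\boldsymbol{v}_{i0}=\boldsymbol{0}$ and $\boldsymbol{v}_{ij}=\boldsymbol{v}_{i,j-1}+\boldsymbol{e}_{ij}$ (first $j$ coordinates equal to $1$), and $\operatorname{vert}(\Delta)=\prod_i\{\boldsymbol{v}_{i0},\dots,\boldsymbol{v}_{id_i}\}$, which is closed under componentwise max and min. A function $g$ is supermodular if $g(\boldsymbol{u}\vee\boldsymbol{w})+g(\boldsymbol{u}\wedge\boldsymbol{w})\ge g(\boldsymbol{u})+g(\boldsymbol{w})$ for all $\boldsymbol{u},\boldsymbol{w}$ in its domain. *)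

theory Defs
  imports Complex_Main "HOL-Combinatorics.Permutations"
begin

definition supermodular_on :: "'a::lattice set \<Rightarrow> ('a \<Rightarrow> real) \<Rightarrow> bool" where
  "supermodular_on S g \<longleftrightarrow>
     (\<forall>u\<in>S. \<forall>w\<in>S. g (sup u w) + g (inf u w) \<ge> g u + g w)"

text \<open>The vertex v_{ij} of Delta^{d_i}: a vector in R^{d_i} (coordinates 0..d_i-1)
  whose first j coordinates are 1 and the rest 0.\<close>
definition vtx :: "(nat \<Rightarrow> nat) \<Rightarrow> nat \<Rightarrow> nat \<Rightarrow> (nat \<Rightarrow> real)" where
  "vtx d i j = (\<lambda>k\<in>{..<d i}. if k < j then 1 else 0)"

definition vertDelta :: "nat \<Rightarrow> (nat \<Rightarrow> nat) \<Rightarrow> (nat \<Rightarrow> nat \<Rightarrow> real) set" where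
  "vertDelta n d = (\<Pi>\<^sub>E i\<in>{..<n}. vtx d i ` {..d i})"

definition box :: "nat \<Rightarrow> (nat \<Rightarrow> real) \<Rightarrow> (nat \<Rightarrow> real) \<Rightarrow> (nat \<Rightarrow> real) set" where
  "box n L U = (\<Pi>\<^sub>E i\<in>{..<n}. {L i..U i})"

definition hfun :: "nat \<Rightarrow> (nat \<Rightarrow> nat) \<Rightarrow> (nat \<Rightarrow> nat \<Rightarrow> real) \<Rightarrow> (nat \<Rightarrow> real \<Rightarrow> real)
     \<Rightarrow> ((nat \<Rightarrow> real) \<Rightarrow> real) \<Rightarrow> (nat \<Rightarrow> nat \<Rightarrow> nat) \<Rightarrow> (nat \<Rightarrow> nat \<Rightarrow> real) \<Rightarrow> real" where
  "hfun n d p f \<phi> \<sigma> V =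
     \<phi> (\<lambda>i\<in>{..<n}. f i (p i (\<sigma> i (THE j. j \<le> d i \<and> V i = vtx d i j))))"

end

theory Submission
  imports Defs
begin

lemma vtx_inj:
  assumes "j \<le> d i" "j' \<le> d i" "vtx d i j = vtx d i j'"
  shows "j = j'"
proof (rule ccontr)
  assume ne: "j \<noteq> j'"
  show False
  proof (cases "j < j'")
    case True
    then have "vtx d i j j \<noteq> vtx d i j' j" using assms(2) by (simp add: vtx_def)
    then show False using assms(3) by simp
  next
    case False
    then have "j' < j" using ne by simp
    then have "vtx d i j j' \<noteq> vtx d i j' j'" using assms(1) by (simp add: vtx_def)
    then show False using assms(3) by simp
  qed
qed

lemma vtx_the:
  assumes "j0 \<le> d i"
  shows "(THE j. j \<le> d i \<and> vtx d i j0 = vtx d i j) = j0"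
  using assms vtx_inj by (intro the_equality) blast+

lemma vtx_sup: "sup (vtx d i a) (vtx d i b) = vtx d i (max a b)"
  by (rule ext) (auto simp: vtx_def sup_real_def inf_real_def)

lemma vtx_inf: "inf (vtx d i a) (vtx d i b) = vtx d i (min a b)"
  by (rule ext) (auto simp: vtx_def sup_real_def inf_real_def)

lemma mono_from_step:
  fixes g :: "nat \<Rightarrow> 'a::order"
  assumes st: "\<And>m. m < N \<Longrightarrow> g m \<le> g (Suc m)"
  shows "a \<le> b \<Longrightarrow> b \<le> N \<Longrightarrow> g a \<le> g b"
proof (induction b)
  case 0 then show ?case by simp
next
  case (Suc c)
  show ?case
  proof (cases "a = Suc c")
    case True then show ?thesis by simp
  next
    case False
    then have "g a \<le> g c" using Suc by simp
    also have "g c \<le> g (Suc c)" using st Suc.prems by simp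
    finally show ?thesis .
  qed
qed

theorem mainTheorem11:
  fixes n :: nat and d :: "nat \<Rightarrow> nat" and p :: "nat \<Rightarrow> nat \<Rightarrow> real"
    and f :: "nat \<Rightarrow> real \<Rightarrow> real" and L U :: "nat \<Rightarrow> real"
    and \<phi> :: "(nat \<Rightarrow> real) \<Rightarrow> real" and \<sigma> :: "nat \<Rightarrow> nat \<Rightarrow> nat"
  assumes "n \<ge> 1"
    and "\<forall>i<n. d i \<ge> 1"
    and "\<forall>i<n. \<forall>j<d i. p i j < p i (Suc j)"
    and "\<forall>i<n. \<forall>j\<le>d i. f i (p i j) \<in> {L i..U i}"
    and "supermodular_on (box n L U) \<phi>"
    and "\<forall>i<n. \<sigma> i permutes {..d i}"
    and "\<forall>i<n. \<forall>j<d i. f i (p i (\<sigma> i j)) \<le> f i (p i (\<sigma> i (Suc j)))"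
  shows "supermodular_on (vertDelta n d) (hfun n d p f \<phi> \<sigma>)"
proof -
  define g where "g i j = f i (p i (\<sigma> i j))" for i j
  have mono_step: "g i m \<le> g i (Suc m)" if "i < n" "m < d i" for i m
    using assms(7) that by (simp add: g_def)
  have mono: "g i a \<le> g i b" if "i < n" "a \<le> b" "b \<le> d i" for i a b
    using mono_from_step[of "d i" "g i" a b] mono_step[OF that(1)] that(2,3) by blast
  have inbox: "g i j \<in> {L i..U i}" if "i < n" "j \<le> d i" for i j
  proof -
    have "\<sigma> i j \<in> {..d i}" using permutes_in_image[of "\<sigma> i" "{..d i}" j] assms(6) that by simp
    then show ?thesis using assms(4) that(1) by (simp add: g_def)
  qed
  have gmax: "g i (max a b) = max (g i a) (g i b)" if "i < n" "a \<le> d i" "b \<le> d i" for i a b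
    using mono[OF that(1), of a b] mono[OF that(1), of b a] that by (cases "a \<le> b") (auto simp: max_def)
  have gmin: "g i (min a b) = min (g i a) (g i b)" if "i < n" "a \<le> d i" "b \<le> d i" for i a b
    using mono[OF that(1), of a b] mono[OF that(1), of b a] that by (cases "a \<le> b") (auto simp: min_def)
  have rep: "\<exists>J. (\<forall>i<n. J i \<le> d i \<and> u i = vtx d i (J i))"
    if "u \<in> vertDelta n d" for u
  proof -
    have "\<forall>i<n. \<exists>j. j \<le> d i \<and> u i = vtx d i j" using that by (auto simp: vertDelta_def PiE_iff)
    then obtain J where "\<forall>i<n. J i \<le> d i \<and> u i = vtx d i (J i)" by metis
    then show ?thesis by blast
  qed
  have hval: "hfun n d p f \<phi> \<sigma> V = \<phi> (\<lambda>i\<in>{..<n}. g i (J i))"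
    if "\<forall>i<n. J i \<le> d i \<and> V i = vtx d i (J i)" for V J
  proof -
    have "(\<lambda>i\<in>{..<n}. f i (p i (\<sigma> i (THE j. j \<le> d i \<and> V i = vtx d i j))))
        = (\<lambda>i\<in>{..<n}. g i (J i))"
      using that vtx_the by (intro restrict_ext) (simp add: g_def)
    then show ?thesis by (simp add: hfun_def)
  qed
  show ?thesis
    unfolding supermodular_on_def
  proof (intro ballI)
    fix u w assume u: "u \<in> vertDelta n d" and w: "w \<in> vertDelta n d"
    obtain Ju where Ju: "\<forall>i<n. Ju i \<le> d i \<and> u i = vtx d i (Ju i)" using rep[OF u] by blast
    obtain Jw where Jw: "\<forall>i<n. Jw i \<le> d i \<and> w i = vtx d i (Jw i)" using rep[OF w] by blast
    define x where "x = (\<lambda>i\<in>{..<n}. g i (Ju i))"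
    define y where "y = (\<lambda>i\<in>{..<n}. g i (Jw i))"
    have xb: "x \<in> box n L U" using Ju inbox by (auto simp: x_def box_def)
    have yb: "y \<in> box n L U" using Jw inbox by (auto simp: y_def box_def)
    have hs: "hfun n d p f \<phi> \<sigma> (sup u w) = \<phi> (sup x y)"
    proof -
      have "hfun n d p f \<phi> \<sigma> (sup u w) = \<phi> (\<lambda>i\<in>{..<n}. g i (max (Ju i) (Jw i)))"
        using Ju Jw vtx_sup by (intro hval) simp
      also have "(\<lambda>i\<in>{..<n}. g i (max (Ju i) (Jw i))) = sup x y"
        using Ju Jw gmax by (intro ext) (auto simp: x_def y_def sup_real_def inf_real_def)
      finally show ?thesis .
    qed
    have hi: "hfun n d p f \<phi> \<sigma> (inf u w) = \<phi> (inf x y)"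
    proof -
      have "hfun n d p f \<phi> \<sigma> (inf u w) = \<phi> (\<lambda>i\<in>{..<n}. g i (min (Ju i) (Jw i)))"
        using Ju Jw vtx_inf by (intro hval) (simp add: min_le_iff_disj)
      also have "(\<lambda>i\<in>{..<n}. g i (min (Ju i) (Jw i))) = inf x y"
        using Ju Jw gmin by (intro ext) (auto simp: x_def y_def sup_real_def inf_real_def)
      finally show ?thesis .
    qed
    have "hfun n d p f \<phi> \<sigma> u = \<phi> x" using hval Ju x_def by blast
    moreover have "hfun n d p f \<phi> \<sigma> w = \<phi> y" using hval Jw y_def by blast
    moreover have "\<phi> (sup x y) + \<phi> (inf x y) \<ge> \<phi> x + \<phi> y"
      using assms(5) xb yb by (auto simp: supermodular_on_def)
    ultimately show "hfun n d p f \<phi> \<sigma> (sup u w) + hfun n d p f \<phi> \<sigma> (inf u w)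
        \<ge> hfun n d p f \<phi> \<sigma> u + hfun n d p f \<phi> \<sigma> w" using hs hi by simp
  qed
qed

end
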